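(* For each integer $k\geq 2$ there is a finite algebra $\mathbf{A}$ with a $1$-pointed $k$-cube term whose growth rate satisfies $d_{\mathbf{A}}(n)\in \Theta(n^{k-1})$.
   Context: An algebra $\mathbf{A}$ has a $1$-pointed $k$-cube term if there is a term $F(x_1,\dots,x_m)$ in the language of $\mathbf{A}$ and a $k\times m$ matrix $M=[y_{i,j}]$ whose entries are variables and exactly one constant symbol (a nullary operation symbol of the language) such that every column of $M$ contains an entry different from the variable $x$ and the identities $F(y_{i,1},\dots,y_{i,m})\approx x$, $i=1,\dots,k$, hold in $\mathbf{A}$. $d_{\mathbf{A}}(n)$ is the least size of a generating set of $\mathbf{A}^n$. *)

theory Defs
  imports Main "HOL-Library.Landau_Symbols"
begin

datatype (syms: 's, vars: 'v) trm = Var 'v | Fn 's "('s, 'v) trm list"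

text \<open>Nullary symbols are the constant symbols.\<close>
definition is_algebra :: "'a set \<Rightarrow> 's set \<Rightarrow> ('s \<Rightarrow> nat) \<Rightarrow> ('s \<Rightarrow> 'a list \<Rightarrow> 'a) \<Rightarrow> bool" where
  "is_algebra A Sig ar op \<longleftrightarrow> A \<noteq> {} \<and>
     (\<forall>f\<in>Sig. \<forall>xs. length xs = ar f \<and> set xs \<subseteq> A \<longrightarrow> op f xs \<in> A)"

fun wf_trm :: "'s set \<Rightarrow> ('s \<Rightarrow> nat) \<Rightarrow> ('s, 'v) trm \<Rightarrow> bool" where
  "wf_trm Sig ar (Var v) = True"
| "wf_trm Sig ar (Fn f ts) = (f \<in> Sig \<and> length ts = ar f \<and> (\<forall>t\<in>set ts. wf_trm Sig ar t))"

fun eval_trm :: "('s \<Rightarrow> 'a list \<Rightarrow> 'a) \<Rightarrow> ('v \<Rightarrow> 'a) \<Rightarrow> ('s, 'v) trm \<Rightarrow> 'a" where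
  "eval_trm op \<rho> (Var v) = \<rho> v"
| "eval_trm op \<rho> (Fn f ts) = op f (map (eval_trm op \<rho>) ts)"

definition has_1pointed_cube_term ::
  "nat \<Rightarrow> 'a set \<Rightarrow> 's set \<Rightarrow> ('s \<Rightarrow> nat) \<Rightarrow> ('s \<Rightarrow> 'a list \<Rightarrow> 'a) \<Rightarrow> bool" where
  "has_1pointed_cube_term k A Sig ar op \<longleftrightarrow>
     (\<exists>(F :: ('s, nat) trm) (m :: nat) (c :: 's) (M :: nat \<Rightarrow> nat \<Rightarrow> ('s, nat) trm) (x :: nat).
        c \<in> Sig \<and> ar c = 0 \<and>
        wf_trm Sig ar F \<and> vars F \<subseteq> {..<m} \<and>
        (\<forall>i<k. \<forall>j<m. M i j = Fn c [] \<or> (\<exists>v. M i j = Var v)) \<and>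
        (\<forall>j<m. \<exists>i<k. M i j \<noteq> Var x) \<and>
        (\<forall>i<k. \<forall>\<rho>. (\<forall>v. \<rho> v \<in> A) \<longrightarrow>
            eval_trm op (\<lambda>j. eval_trm op \<rho> (M i j)) F = \<rho> x))"

definition power_carrier :: "'a set \<Rightarrow> nat \<Rightarrow> 'a list set" where
  "power_carrier A n = {v. length v = n \<and> set v \<subseteq> A}"

inductive_set generated :: "'s set \<Rightarrow> ('s \<Rightarrow> nat) \<Rightarrow> ('s \<Rightarrow> 'a list \<Rightarrow> 'a) \<Rightarrow> nat \<Rightarrow> 'a list set \<Rightarrow> 'a list set"
  for Sig ar op n S where
  gen_base: "v \<in> S \<Longrightarrow> v \<in> generated Sig ar op n S"
| gen_op: "\<lbrakk>f \<in> Sig; length vs = ar f; \<forall>u\<in>set vs. u \<in> generated Sig ar op n S\<rbrakk>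
     \<Longrightarrow> map (\<lambda>i. op f (map (\<lambda>v. v ! i) vs)) [0..<n] \<in> generated Sig ar op n S"

definition d_gen :: "'a set \<Rightarrow> 's set \<Rightarrow> ('s \<Rightarrow> nat) \<Rightarrow> ('s \<Rightarrow> 'a list \<Rightarrow> 'a) \<Rightarrow> nat \<Rightarrow> nat" where
  "d_gen A Sig ar op n = (LEAST c. \<exists>S. S \<subseteq> power_carrier A n \<and> finite S \<and> card S = c \<and>
                                     generated Sig ar op n S = power_carrier A n)"

end

theory Submission
  imports Defs
begin

definition opf :: "nat list \<Rightarrow> nat" where
  "opf xs = (if set xs \<subseteq> {0} then 0
             else if card {j. j < length xs \<and> xs ! j \<noteq> 1} \<le> 1 then 1 else 2)"

definition Ar :: "nat \<Rightarrow> nat \<Rightarrow> nat" where "Ar k s = (if s = 0 then 0 else k)"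
definition Op :: "nat \<Rightarrow> nat list \<Rightarrow> nat" where "Op s xs = (if s = 0 then 0 else opf xs)"

definition chi :: "nat \<Rightarrow> nat set \<Rightarrow> nat list" where
  "chi n T = map (\<lambda>i. if i \<in> T then 1 else 0) [0..<n]"

definition S0 :: "nat \<Rightarrow> nat \<Rightarrow> nat list set" where
  "S0 k n = {v \<in> power_carrier {0,1,2} n. card {i. i < n \<and> v ! i \<noteq> 0} \<le> k - 1}"

lemma opf_range: "opf xs \<in> {0,1,2}" by (simp add: opf_def)

lemma opfA: "set xs \<subseteq> {0} \<Longrightarrow> opf xs = 0"
  unfolding opf_def by (rule if_P)

lemma opfB: "\<not> set xs \<subseteq> {0} \<Longrightarrow> card {j. j < length xs \<and> xs ! j \<noteq> 1} \<le> 1 \<Longrightarrow> opf xs = 1"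
  unfolding opf_def by (subst if_not_P, assumption, rule if_P)

lemma opfC: "\<not> set xs \<subseteq> {0} \<Longrightarrow> \<not> card {j. j < length xs \<and> xs ! j \<noteq> 1} \<le> 1 \<Longrightarrow> opf xs = 2"
  unfolding opf_def by (subst if_not_P, assumption, rule if_not_P)

lemma opf0: "opf xs = 0 \<Longrightarrow> set xs \<subseteq> {0}"
  using opfB opfC by (metis one_neq_zero zero_neq_numeral)

lemma opf1: "opf xs = 1 \<Longrightarrow> card {j. j < length xs \<and> xs ! j \<noteq> 1} \<le> 1"
  using opfA opfC by (metis numeral_eq_one_iff semiring_norm(85) zero_neq_one)

lemma opf_map:
  assumes "\<not> set (map g [0..<k]) \<subseteq> {0}"
  shows "opf (map g [0..<k]) = (if card {j. j < k \<and> g j \<noteq> 1} \<le> 1 then 1 else 2)"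
proof -
  have "{j. j < length (map g [0..<k]) \<and> map g [0..<k] ! j \<noteq> 1} = {j. j < k \<and> g j \<noteq> 1}"
    by auto
  then show ?thesis using assms opfB[of "map g [0..<k]"] opfC[of "map g [0..<k]"] by (simp only:) auto
qed

lemma opf_zero: "opf (map (\<lambda>j. 0) xs) = 0"
  by (rule opfA) auto

lemma opf_const:
  assumes "k \<ge> 2" "a \<in> {0,1,2::nat}"
  shows "opf (map (\<lambda>j. a) [0..<k]) = a"
proof -
  have ne: "0 \<in> set [0..<k]" using assms(1) by simp
  have "a = 0 \<or> a = 1 \<or> a = 2" using assms(2) by auto
  then show ?thesis
  proof (elim disjE)
    assume "a = 0" then show ?thesis using opf_zero by simp
  next
    assume a: "a = 1"
    have ns: "\<not> set (map (\<lambda>j. a) [0..<k]) \<subseteq> {0}" using ne a by force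
    have c: "card {j. j < k \<and> a \<noteq> 1} = 0" using a by simp
    have "opf (map (\<lambda>j. a) [0..<k]) = (if card {j. j < k \<and> a \<noteq> 1} \<le> 1 then 1 else 2)"
      by (rule opf_map[OF ns])
    also have "\<dots> = 1" unfolding c by simp
    finally show ?thesis using a by simp
  next
    assume a: "a = 2"
    have ns: "\<not> set (map (\<lambda>j. a) [0..<k]) \<subseteq> {0}" using ne a by force
    have c: "card {j. j < k \<and> a \<noteq> 1} = k" using a by simp
    have "opf (map (\<lambda>j. a) [0..<k]) = (if card {j. j < k \<and> a \<noteq> 1} \<le> 1 then 1 else 2)"
      by (rule opf_map[OF ns])
    also have "\<dots> = 2" unfolding c using assms(1) by simp
    finally show ?thesis using a by simp
  qed
qed

lemma opf_pt:
  assumes "k \<ge> 2" "i < k" "a \<in> {0,1,2::nat}"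
  shows "opf (map (\<lambda>j. if j = i then 0 else a) [0..<k]) = a"
proof -
  obtain j0 where j0: "j0 < k" "j0 \<noteq> i"
  proof (cases "i = 0")
    case True then show ?thesis using that[of 1] assms(1) by simp
  next
    case False then show ?thesis using that[of 0] assms(2) by simp
  qed
  have j0s: "j0 \<in> set [0..<k]" using j0 by simp
  have "a = 0 \<or> a = 1 \<or> a = 2" using assms(3) by auto
  then show ?thesis
  proof (elim disjE)
    assume a: "a = 0"
    have "map (\<lambda>j. if j = i then 0 else a) [0..<k] = map (\<lambda>j. 0) [0..<k]" using a by simp
    then show ?thesis using a opf_zero by metis
  next
    assume a: "a = 1"
    have ns: "\<not> set (map (\<lambda>j. if j = i then 0 else a) [0..<k]) \<subseteq> {0}"
      using j0 j0s a by force
    have "{j. j < k \<and> (if j = i then 0 else a) \<noteq> 1} = {i}" using a assms(2) by auto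
    then have c: "card {j. j < k \<and> (if j = i then 0 else a) \<noteq> 1} = 1" by simp
    have "opf (map (\<lambda>j. if j = i then 0 else a) [0..<k]) = (if card {j. j < k \<and> (if j = i then 0 else a) \<noteq> 1} \<le> 1 then 1 else 2)"
      by (rule opf_map[OF ns])
    also have "\<dots> = 1" unfolding c by simp
    finally show ?thesis using a by simp
  next
    assume a: "a = 2"
    have ns: "\<not> set (map (\<lambda>j. if j = i then 0 else a) [0..<k]) \<subseteq> {0}"
      using j0 j0s a by force
    have "{j. j < k \<and> (if j = i then 0 else a) \<noteq> 1} = {..<k}" using a by auto
    then have c: "card {j. j < k \<and> (if j = i then 0 else a) \<noteq> 1} = k" by simp
    have "opf (map (\<lambda>j. if j = i then 0 else a) [0..<k]) = (if card {j. j < k \<and> (if j = i then 0 else a) \<noteq> 1} \<le> 1 then 1 else 2)"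
      by (rule opf_map[OF ns])
    also have "\<dots> = 2" unfolding c using assms(1) by simp
    finally show ?thesis using a by simp
  qed
qed

lemma gen_sub:
  assumes "S \<subseteq> power_carrier {0,1,2} n"
  shows "v \<in> generated {0,1} (Ar k) Op n S \<Longrightarrow> v \<in> power_carrier {0,1,2} n"
proof (induction rule: generated.induct)
  case (gen_base v) then show ?case using assms by auto
next
  case (gen_op f vs)
  have h: "\<And>x. Op f x \<in> {0,1,2}" using opf_range by (simp add: Op_def)
  have "set (map (\<lambda>i. Op f (map (\<lambda>v. v ! i) vs)) [0..<n]) \<subseteq> {0,1,2}"
    by (simp only: set_map) (intro image_subsetI h)
  then show ?case by (simp add: power_carrier_def)
qed

lemma gen_all:
  assumes k: "k \<ge> 2"
  shows "v \<in> power_carrier {0,1,2} n \<Longrightarrow> v \<in> generated {0,1} (Ar k) Op n (S0 k n)"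
proof (induction "card {i. i < n \<and> v ! i \<noteq> 0}" arbitrary: v rule: less_induct)
  case less
  let ?N = "{i. i < n \<and> v ! i \<noteq> 0}"
  have lenv: "length v = n" and setv: "set v \<subseteq> {0,1,2}"
    using less.prems by (auto simp: power_carrier_def)
  have finN: "finite ?N" by simp
  show ?case
  proof (cases "card ?N \<le> k - 1")
    case True then show ?thesis using less.prems by (auto intro: gen_base simp: S0_def)
  next
    case False
    then have "k \<le> card ?N" by simp
    then obtain C where C: "C \<subseteq> ?N" "card C = k" "finite C" by (meson obtain_subset_with_card_n)
    define cs where "cs = sorted_list_of_set C"
    have cs: "distinct cs" "length cs = k" "set cs = C" using C by (auto simp: cs_def)
    define vs where "vs = map (\<lambda>j. v[cs!j := 0]) [0..<k]"
    have mem: "\<forall>u\<in>set vs. u \<in> generated {0,1} (Ar k) Op n (S0 k n)"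
    proof
      fix u assume "u \<in> set vs"
      then obtain j where j: "j < k" "u = v[cs!j := 0]" by (auto simp: vs_def)
      have cj: "cs!j \<in> ?N" using j cs C by (metis nth_mem subsetD)
      have cjn: "cs!j < length v" using cj lenv by simp
      have eq: "{i. i < n \<and> u ! i \<noteq> 0} = ?N - {cs!j}"
      proof (rule set_eqI)
        fix x show "x \<in> {i. i < n \<and> u ! i \<noteq> 0} \<longleftrightarrow> x \<in> ?N - {cs!j}"
        proof (cases "x = cs!j")
          case True then show ?thesis using j(2) cjn by simp
        next
          case False then show ?thesis using j(2) by simp
        qed
      qed
      have lt: "card {i. i < n \<and> u ! i \<noteq> 0} < card ?N"
        unfolding eq using cj finN by (meson card_Diff1_less)
      have "set u \<subseteq> insert 0 (set v)" using j(2) by (simp add: set_update_subset_insert)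
      then have "u \<in> power_carrier {0,1,2} n" using setv lenv j(2)
        by (auto simp: power_carrier_def)
      then show "u \<in> generated {0,1} (Ar k) Op n (S0 k n)" using less.hyps lt by blast
    qed
    have g: "map (\<lambda>i. Op 1 (map (\<lambda>u. u!i) vs)) [0..<n] \<in> generated {0,1} (Ar k) Op n (S0 k n)"
      by (rule gen_op[OF _ _ mem]) (simp_all add: Ar_def vs_def)
    have "map (\<lambda>i. Op 1 (map (\<lambda>u. u!i) vs)) [0..<n] = v"
    proof (rule nth_equalityI)
      show "length (map (\<lambda>i. Op 1 (map (\<lambda>u. u!i) vs)) [0..<n]) = length v" using lenv by simp
    next
      fix i assume "i < length (map (\<lambda>i. Op 1 (map (\<lambda>u. u!i) vs)) [0..<n])"
      then have i: "i < n" by simp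
      have vi: "v ! i \<in> {0,1,2}" using setv i lenv nth_mem by blast
      have col: "map (\<lambda>u. u!i) vs = map (\<lambda>j. if cs!j = i then 0 else v!i) [0..<k]"
        using i lenv by (simp add: vs_def nth_list_update)
      have "opf (map (\<lambda>j. if cs!j = i then 0 else v!i) [0..<k]) = v ! i"
      proof (cases "i \<in> set cs")
        case True
        then obtain j0 where j0: "j0 < k" "cs!j0 = i" using cs by (metis in_set_conv_nth)
        have "map (\<lambda>j. if cs!j = i then 0 else v!i) [0..<k] = map (\<lambda>j. if j = j0 then 0 else v!i) [0..<k]"
          using j0 cs by (auto simp: nth_eq_iff_index_eq)
        then show ?thesis using opf_pt[OF k j0(1) vi] by metis
      next
        case False
        then have "map (\<lambda>j. if cs!j = i then 0 else v!i) [0..<k] = map (\<lambda>j. v!i) [0..<k]"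
          using cs by (auto simp: in_set_conv_nth)
        then show ?thesis using opf_const[OF k vi] by metis
      qed
      then show "map (\<lambda>i. Op 1 (map (\<lambda>u. u!i) vs)) [0..<n] ! i = v ! i"
        using i col by (simp add: Op_def)
    qed
    then show ?thesis using g by simp
  qed
qed

lemma chi_in:
  assumes k: "k \<ge> 2" and S: "S \<subseteq> power_carrier {0,1,2} n"
    and T: "T \<subseteq> {..<n}" "card T = k - 1"
  shows "v \<in> generated {0,1} (Ar k) Op n S \<Longrightarrow> v = chi n T \<Longrightarrow> v \<in> S"
proof (induction rule: generated.induct)
  case (gen_base v) then show ?case by simp
next
  case (gen_op f vs)
  have finT: "finite T" using T(1) finite_subset by blast
  have Tne: "T \<noteq> {}" using T(2) k by auto
  show ?case
  proof (cases "f = 0")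
    case True
    then have "vs = []" using gen_op.hyps(2) by (simp add: Ar_def)
    obtain t where t: "t \<in> T" using Tne by blast
    have tn: "t < n" using t T(1) by auto
    have "map (\<lambda>i. Op f (map (\<lambda>v. v ! i) vs)) [0..<n] ! t = chi n T ! t" by (simp only: gen_op.prems)
    then show ?thesis using True t tn by (simp add: Op_def chi_def)
  next
    case False
    then have f1: "f = 1" and lvs: "length vs = k" using gen_op.hyps(1,2) by (auto simp: Ar_def)
    show ?thesis
    proof (cases "chi n T \<in> set vs")
      case True
      then have "chi n T \<in> S" using gen_op.IH by blast
      then show ?thesis by (simp only: gen_op.prems)
    next
      case notin: False
      have colv: "opf (map (\<lambda>u. u!c) vs) = (if c \<in> T then 1 else 0)" if c: "c < n" for c
      proof -
        have "map (\<lambda>i. Op f (map (\<lambda>v. v ! i) vs)) [0..<n] ! c = chi n T ! c" by (simp only: gen_op.prems)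
        then show ?thesis using c f1 by (simp add: Op_def chi_def)
      qed
      have ex: "\<exists>c. c < n \<and> c \<in> T \<and> vs!j!c \<noteq> 1" if j: "j < k" for j
      proof -
        have u: "vs!j \<in> set vs" using j lvs by simp
        then have "vs!j \<in> generated {0,1} (Ar k) Op n S" using gen_op.IH by blast
        then have "length (vs!j) = n" using gen_sub[OF S] by (auto simp: power_carrier_def)
        moreover have "vs!j \<noteq> chi n T" using u notin by auto
        moreover have "length (chi n T) = n" by (simp add: chi_def)
        ultimately have "\<exists>c<n. vs!j!c \<noteq> chi n T ! c"
          using nth_equalityI[of "vs!j" "chi n T"] by auto
        then obtain c where c: "c < n" "vs!j!c \<noteq> chi n T ! c" by blast
        have inset: "vs!j!c \<in> set (map (\<lambda>u. u!c) vs)" using u by auto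
        show ?thesis
        proof (cases "c \<in> T")
          case True then show ?thesis using c by (auto simp: chi_def)
        next
          case False
          then have o0: "opf (map (\<lambda>u. u!c) vs) = 0" using colv[OF c(1)] by simp
          have "set (map (\<lambda>u. u!c) vs) \<subseteq> {0}" by (rule opf0[OF o0])
          then have "vs!j!c = 0" using inset by auto
          then show ?thesis using c False by (simp add: chi_def)
        qed
      qed
      define phi where "phi j = (SOME c. c < n \<and> c \<in> T \<and> vs!j!c \<noteq> 1)" for j
      have phi: "phi j < n \<and> phi j \<in> T \<and> vs!j!(phi j) \<noteq> 1" if "j < k" for j
        unfolding phi_def using someI_ex[OF ex[OF that]] .
      have "\<not> inj_on phi {..<k}"
      proof
        assume "inj_on phi {..<k}"
        moreover have "phi ` {..<k} \<subseteq> T" using phi by auto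
        ultimately have "card {..<k} \<le> card T" using finT card_inj_on_le by blast
        then show False using T(2) k by simp
      qed
      then obtain j1 j2 where jj: "j1 < k" "j2 < k" "j1 \<noteq> j2" "phi j1 = phi j2"
        unfolding inj_on_def by blast
      define c where "c = phi j1"
      have c: "c < n" "c \<in> T" using phi[OF jj(1)] by (auto simp: c_def)
      have "card {j. j < length (map (\<lambda>u. u!c) vs) \<and> map (\<lambda>u. u!c) vs ! j \<noteq> 1} \<le> 1"
      proof -
        have o1: "opf (map (\<lambda>u. u!c) vs) = 1" using colv[OF c(1)] c(2) by simp
        show ?thesis by (rule opf1[OF o1])
      qed
      moreover have "{j1, j2} \<subseteq> {j. j < length (map (\<lambda>u. u!c) vs) \<and> map (\<lambda>u. u!c) vs ! j \<noteq> 1}"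
        using phi[OF jj(1)] phi[OF jj(2)] jj lvs by (auto simp: c_def)
      moreover have "card {j1, j2} = 2" using jj(3) by simp
      moreover have "finite {j. j < length (map (\<lambda>u. u!c) vs) \<and> map (\<lambda>u. u!c) vs ! j \<noteq> 1}"
        by (rule finite_subset[of _ "{..<length (map (\<lambda>u. u!c) vs)}"]) auto
      ultimately have "card {j1, j2} \<le> (1::nat)" using card_mono le_trans by blast
      then have "2 \<le> (1::nat)" using \<open>card {j1, j2} = 2\<close> by simp
      then have False by simp
      then show ?thesis ..
    qed
  qed
qed

lemma S0_good:
  assumes "k \<ge> 2"
  shows "S0 k n \<subseteq> power_carrier {0,1,2} n \<and> finite (S0 k n) \<and>
         generated {0,1} (Ar k) Op n (S0 k n) = power_carrier {0,1,2} n"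
proof -
  have sub: "S0 k n \<subseteq> power_carrier {0,1,2} n" by (auto simp: S0_def)
  have fin: "finite (power_carrier {0,1,2::nat} n)"
    unfolding power_carrier_def using finite_lists_length_eq[of "{0,1,2::nat}" n]
    by (simp add: conj_commute)
  have g: "generated {0,1} (Ar k) Op n (S0 k n) = power_carrier {0,1,2} n"
  proof (rule equalityI)
    show "generated {0,1} (Ar k) Op n (S0 k n) \<subseteq> power_carrier {0,1,2} n"
    proof
      fix v :: "nat list" assume "v \<in> generated {0,1} (Ar k) Op n (S0 k n)"
      then show "v \<in> power_carrier {0,1,2} n" by (rule gen_sub[OF sub])
    qed
    show "power_carrier {0,1,2} n \<subseteq> generated {0,1} (Ar k) Op n (S0 k n)"
    proof
      fix v :: "nat list" assume "v \<in> power_carrier {0,1,2} n"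
      then show "v \<in> generated {0,1} (Ar k) Op n (S0 k n)" by (rule gen_all[OF assms])
    qed
  qed
  have f: "finite (S0 k n)" by (rule finite_subset[OF sub fin])
  show ?thesis using sub f g by (intro conjI)
qed

lemma d_upper:
  assumes "k \<ge> 2"
  shows "d_gen {0,1,2} {0,1} (Ar k) Op n \<le> card (S0 k n)"
proof -
  have "\<exists>S. S \<subseteq> power_carrier {0,1,2} n \<and> finite S \<and> card S = card (S0 k n) \<and>
                    generated {0,1} (Ar k) Op n S = power_carrier {0,1,2} n"
  proof -
    have "S0 k n \<subseteq> power_carrier {0,1,2} n" "finite (S0 k n)"
      "generated {0,1} (Ar k) Op n (S0 k n) = power_carrier {0,1,2} n"
      using S0_good[OF assms] by blast+
    then show ?thesis by blast
  qed
  then show ?thesis unfolding d_gen_def by (rule Least_le)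
qed

lemma d_lower:
  assumes k: "k \<ge> 2"
  shows "n choose (k - 1) \<le> d_gen {0,1,2} {0,1} (Ar k) Op n"
proof -
  have ex: "\<exists>S. S \<subseteq> power_carrier {0,1,2} n \<and> finite S \<and> card S = card (S0 k n) \<and>
                    generated {0,1} (Ar k) Op n S = power_carrier {0,1,2} n"
  proof -
    have "S0 k n \<subseteq> power_carrier {0,1,2} n" "finite (S0 k n)"
      "generated {0,1} (Ar k) Op n (S0 k n) = power_carrier {0,1,2} n"
      using S0_good[OF k] by blast+
    then show ?thesis by blast
  qed
  have "\<exists>S. S \<subseteq> power_carrier {0,1,2} n \<and> finite S \<and> card S = d_gen {0,1,2} {0,1} (Ar k) Op n \<and>
                    generated {0,1} (Ar k) Op n S = power_carrier {0,1,2} n"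
    unfolding d_gen_def by (rule LeastI[where P="\<lambda>c. \<exists>S. S \<subseteq> power_carrier {0,1,2} n \<and> finite S \<and> card S = c \<and>
                    generated {0,1} (Ar k) Op n S = power_carrier {0,1,2} n", OF ex])
  then obtain S where S: "S \<subseteq> power_carrier {0,1,2} n" "finite S"
     "card S = d_gen {0,1,2} {0,1} (Ar k) Op n"
     "generated {0,1} (Ar k) Op n S = power_carrier {0,1,2} n"
    by (elim exE conjE)
  let ?F = "{T. T \<subseteq> {..<n} \<and> card T = k - 1}"
  have img: "chi n ` ?F \<subseteq> S"
  proof
    fix w assume "w \<in> chi n ` ?F"
    then obtain T where T: "T \<subseteq> {..<n}" "card T = k - 1" and w: "w = chi n T" by blast
    have "chi n T \<in> power_carrier {0,1,2} n" by (auto simp: chi_def power_carrier_def)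
    then have "chi n T \<in> generated {0,1} (Ar k) Op n S" using S(4) by simp
    then have "chi n T \<in> S" using chi_in[OF k S(1) T] by blast
    then show "w \<in> S" using w by simp
  qed
  have inj: "inj_on (chi n) ?F"
  proof
    fix T T' assume "T \<in> ?F" "T' \<in> ?F" "chi n T = chi n T'"
    then have TT: "T \<subseteq> {..<n}" "T' \<subseteq> {..<n}" and e: "chi n T = chi n T'" by auto
    have "i \<in> T \<longleftrightarrow> i \<in> T'" if "i < n" for i
    proof -
      have "chi n T ! i = chi n T' ! i" using e by simp
      then show ?thesis using that by (simp add: chi_def split: if_splits)
    qed
    then show "T = T'" using TT by blast
  qed
  have "card ?F \<le> card S" by (rule card_inj_on_le[OF inj img S(2)])
  moreover have "card ?F = n choose (k - 1)" using n_subsets[of "{..<n}" "k - 1"] by simp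
  ultimately show ?thesis using S(3) by simp
qed

lemma card_S0: "card (S0 k n) \<le> (2*n+1)^(k-1)"
proof -
  define OP where "OP = insert None (Some ` ({..<n} \<times> {1,2::nat}))"
  define L where "L = {xs. set xs \<subseteq> OP \<and> length xs = k - 1}"
  define h :: "(nat \<times> nat) option list \<Rightarrow> nat list" where "h xs = map (\<lambda>i. if Some (i,1) \<in> set xs then 1
                         else if Some (i,2) \<in> set xs then 2 else (0::nat)) [0..<n]" for xs
  have finOP: "finite OP" by (simp add: OP_def)
  have c1: "card (Some ` ({..<n} \<times> {1,2::nat})) = 2*n"
    by (simp add: card_image card_cartesian_product)
  have cOP: "card OP = 2*n+1" unfolding OP_def using c1 by (simp add: card_insert_if)
  have cL: "card L = (2*n+1)^(k-1)" unfolding L_def using card_lists_length_eq[OF finOP] cOP by simp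
  have finL: "finite L" unfolding L_def using finite_lists_length_eq[OF finOP] by simp
  have sub: "S0 k n \<subseteq> h ` L"
  proof
    fix v assume v: "v \<in> S0 k n"
    define N where "N = {i. i < n \<and> v ! i \<noteq> 0}"
    have lenv: "length v = n" and setv: "set v \<subseteq> {0,1,2}" and cN: "card N \<le> k - 1"
      using v by (auto simp: S0_def power_carrier_def N_def)
    have finN: "finite N" by (simp add: N_def)
    define xs where "xs = map (\<lambda>i. Some (i, v!i)) (sorted_list_of_set N) @ replicate (k - 1 - card N) None"
    have mem: "Some (i,a) \<in> set xs \<longleftrightarrow> i \<in> N \<and> a = v!i" for i a
      using finN by (auto simp: xs_def)
    have vals: "v ! i \<in> {0,1,2}" if "i < n" for i using setv lenv that nth_mem by blast
    have "xs \<in> L"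
    proof -
      have "length xs = k - 1" using cN finN by (simp add: xs_def)
      moreover have "set xs \<subseteq> OP"
      proof
        fix y assume y: "y \<in> set xs"
        show "y \<in> OP"
        proof (cases y)
          case None then show ?thesis by (simp add: OP_def)
        next
          case (Some p)
          obtain i a where p: "p = (i,a)" by fastforce
          have "i \<in> N \<and> a = v!i" using mem y Some p by simp
          then have "i < n" "a \<in> {1,2}" using vals[of i] by (auto simp: N_def)
          then show ?thesis using Some p by (auto simp: OP_def)
        qed
      qed
      ultimately show ?thesis by (simp add: L_def)
    qed
    moreover have "h xs = v"
    proof (rule nth_equalityI)
      show "length (h xs) = length v" using lenv by (simp add: h_def)
    next
      fix i assume "i < length (h xs)"
      then have i: "i < n" by (simp add: h_def)
      have "v ! i = 0 \<or> v ! i = 1 \<or> v ! i = 2" using vals[OF i] by auto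
      then show "h xs ! i = v ! i"
        using i mem[of i 1] mem[of i 2] by (auto simp: h_def N_def)
    qed
    ultimately show "v \<in> h ` L" by blast
  qed
  have "card (S0 k n) \<le> card (h ` L)" using sub finL by (simp add: card_mono)
  also have "\<dots> \<le> card L" using finL by (rule card_image_le)
  finally show ?thesis using cL by simp
qed

lemma Op_range: "Op f xs \<in> {0,1,2}"
  using opf_range by (simp add: Op_def)

theorem theorem5p8:
  fixes k :: nat
  assumes "k \<ge> 2"
  shows "\<exists>(A :: nat set) (Sig :: nat set) (ar :: nat \<Rightarrow> nat) (op :: nat \<Rightarrow> nat list \<Rightarrow> nat).
           is_algebra A Sig ar op \<and> finite A \<and>
           has_1pointed_cube_term k A Sig ar op \<and>
           (\<lambda>n. real (d_gen A Sig ar op n)) \<in> \<Theta>(\<lambda>n. real n ^ (k - 1))"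
proof (intro exI conjI)
  have k: "k \<ge> 2" by (rule assms)
  show "is_algebra {0,1,2} {0,1} (Ar k) Op" using Op_range by (simp add: is_algebra_def)
  show "finite {0,1,2::nat}" by simp
  show "has_1pointed_cube_term k {0,1,2} {0,1} (Ar k) Op"
    unfolding has_1pointed_cube_term_def
  proof (intro exI conjI)
    let ?F = "Fn (1::nat) (map Var [0..<k]) :: (nat, nat) trm"
    let ?M = "\<lambda>i j. if j = i then Fn (0::nat) [] else (Var 0 :: (nat,nat) trm)"
    show "(0::nat) \<in> {0,1}" by simp
    show "Ar k 0 = 0" by (simp add: Ar_def)
    show "wf_trm {0,1} (Ar k) ?F" by (simp add: Ar_def)
    show "vars ?F \<subseteq> {..<k}" by auto
    show "\<forall>i<k. \<forall>j<k. ?M i j = Fn 0 [] \<or> (\<exists>v. ?M i j = Var v)" by auto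
    show "\<forall>j<k. \<exists>i<k. ?M i j \<noteq> Var 0" by auto
    show "\<forall>i<k. \<forall>\<rho>. (\<forall>v. \<rho> v \<in> {0,1,2}) \<longrightarrow>
            eval_trm Op (\<lambda>j. eval_trm Op \<rho> (?M i j)) ?F = \<rho> 0"
    proof (intro allI impI)
      fix i and \<rho> :: "nat \<Rightarrow> nat" assume i: "i < k" and r: "\<forall>v. \<rho> v \<in> {0,1,2::nat}"
      have "eval_trm Op (\<lambda>j. eval_trm Op \<rho> (?M i j)) ?F
            = opf (map (\<lambda>j. eval_trm Op \<rho> (?M i j)) [0..<k])"
        by (simp add: Op_def o_def)
      also have "map (\<lambda>j. eval_trm Op \<rho> (?M i j)) [0..<k] = map (\<lambda>j. if j = i then 0 else \<rho> 0) [0..<k]"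
        by (simp add: Op_def)
      also have "opf \<dots> = \<rho> 0" using opf_pt[OF k i] r by blast
      finally show "eval_trm Op (\<lambda>j. eval_trm Op \<rho> (?M i j)) ?F = \<rho> 0" .
    qed
  qed
  show "(\<lambda>n. real (d_gen {0,1,2} {0,1} (Ar k) Op n)) \<in> \<Theta>(\<lambda>n. real n ^ (k - 1))"
  proof (rule bigthetaI')
    show "1 / real (k-1) ^ (k-1) > 0" using k by simp
    show "(3::real) ^ (k-1) > 0" by simp
    show "\<forall>\<^sub>F n in at_top. 1 / real (k-1) ^ (k-1) * norm (real n ^ (k-1)) \<le> norm (real (d_gen {0,1,2} {0,1} (Ar k) Op n))
          \<and> norm (real (d_gen {0,1,2} {0,1} (Ar k) Op n)) \<le> 3 ^ (k-1) * norm (real n ^ (k-1))"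
      unfolding eventually_at_top_linorder
    proof (intro exI allI impI)
      fix n :: nat assume n: "n \<ge> k"
      let ?d = "d_gen {0,1,2} {0,1} (Ar k) Op n"
      have "1 / real (k-1) ^ (k-1) * real n ^ (k-1) = (real n / real (k-1)) ^ (k-1)"
        by (simp add: power_divide)
      also have "\<dots> \<le> real (n choose (k-1))"
      proof -
        have "k - 1 \<le> n" using n by simp
        from binomial_ge_n_over_k_pow_k[OF this, where 'a=real] show ?thesis by simp
      qed
      also have "\<dots> \<le> real ?d" using d_lower[OF k, of n] by simp
      finally have lo: "1 / real (k-1) ^ (k-1) * real n ^ (k-1) \<le> real ?d" .
      have "real ?d \<le> real (card (S0 k n))" using d_upper[OF k, of n] by simp
      also have "\<dots> \<le> real ((2*n+1)^(k-1))" using card_S0[of k n] by linarith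
      also have "\<dots> = (2 * real n + 1) ^ (k-1)" by (simp add: add.commute)
      also have "\<dots> \<le> (3 * real n) ^ (k-1)"
        using n k by (intro power_mono) auto
      also have "\<dots> = 3 ^ (k-1) * real n ^ (k-1)" by (simp add: power_mult_distrib)
      finally have up: "real ?d \<le> 3 ^ (k-1) * real n ^ (k-1)" .
      show "1 / real (k-1) ^ (k-1) * norm (real n ^ (k-1)) \<le> norm (real ?d)
          \<and> norm (real ?d) \<le> 3 ^ (k-1) * norm (real n ^ (k-1))"
        using lo up by simp
    qed
  qed
qed

end
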